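(* Let $T_1,\dots,T_k$ be subtrees of a tree $T$ such that $T=T_1\cup\dots\cup T_k$. Then $\operatorname{pw}(T)+1\le \sum_{i=1}^k(\operatorname{pw}(T_i)+1)$.
   Context: $\operatorname{pw}$ denotes pathwidth: the minimum, over all path decompositions (sequences of vertex subsets such that each edge lies in some set and each vertex lies in a non-empty consecutive run of sets), of the maximum set size minus 1. A subtree is a connected subgraph of $T$. *)

theory Defs
  imports Main
begin

definition graph :: "'a set \<Rightarrow> 'a set set \<Rightarrow> bool" where
  "graph V E \<longleftrightarrow> finite V \<and> (\<forall>e\<in>E. card e = 2 \<and> e \<subseteq> V)"

definition reach :: "'a set set \<Rightarrow> 'a \<Rightarrow> 'a \<Rightarrow> bool" where
  "reach E = (\<lambda>u v. {u, v} \<in> E)\<^sup>*\<^sup>*"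

definition connected_graph :: "'a set \<Rightarrow> 'a set set \<Rightarrow> bool" where
  "connected_graph V E \<longleftrightarrow> graph V E \<and> V \<noteq> {} \<and> (\<forall>u\<in>V. \<forall>v\<in>V. reach E u v)"

definition is_cycle :: "'a set set \<Rightarrow> 'a list \<Rightarrow> bool" where
  "is_cycle E cs \<longleftrightarrow> length cs \<ge> 3 \<and> distinct cs \<and>
     (\<forall>i < length cs. {cs ! i, cs ! (Suc i mod length cs)} \<in> E)"

definition tree :: "'a set \<Rightarrow> 'a set set \<Rightarrow> bool" where
  "tree V E \<longleftrightarrow> connected_graph V E \<and> (\<nexists>cs. is_cycle E cs)"

definition subgraph :: "'a set \<Rightarrow> 'a set set \<Rightarrow> 'a set \<Rightarrow> 'a set set \<Rightarrow> bool" where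
  "subgraph V' E' V E \<longleftrightarrow> graph V' E' \<and> V' \<subseteq> V \<and> E' \<subseteq> E"

definition subtree :: "'a set \<Rightarrow> 'a set set \<Rightarrow> 'a set \<Rightarrow> 'a set set \<Rightarrow> bool" where
  "subtree V' E' V E \<longleftrightarrow> subgraph V' E' V E \<and> connected_graph V' E'"

definition path_decomp :: "'a set \<Rightarrow> 'a set set \<Rightarrow> 'a set list \<Rightarrow> bool" where
  "path_decomp V E B \<longleftrightarrow> B \<noteq> [] \<and> (\<forall>b\<in>set B. b \<subseteq> V) \<and>
     (\<forall>e\<in>E. \<exists>b\<in>set B. e \<subseteq> b) \<and>
     (\<forall>v\<in>V. (\<exists>i<length B. v \<in> B ! i) \<and>
        (\<forall>i j l. i \<le> j \<and> j \<le> l \<and> l < length B \<and> v \<in> B ! i \<and> v \<in> B ! l \<longrightarrow> v \<in> B ! j))"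

definition pd_width :: "'a set list \<Rightarrow> int" where
  "pd_width B = int (Max (card ` set B)) - 1"

definition pathwidth :: "'a set \<Rightarrow> 'a set set \<Rightarrow> int" where
  "pathwidth V E = (LEAST w. \<exists>B. path_decomp V E B \<and> pd_width B = w)"

end

theory Submission
  imports Defs
begin


lemma walk_path:
  assumes "r\<^sup>*\<^sup>* x y"
  shows "\<exists>ps. ps \<noteq> [] \<and> hd ps = x \<and> last ps = y \<and> distinct ps \<and> (\<forall>i. Suc i < length ps \<longrightarrow> r (ps!i) (ps!Suc i))"
  using assms
proof (induction rule: rtranclp_induct)
  case base
  then show ?case by (rule exI[of _ "[x]"]) auto
next
  case (step y z)
  then obtain ps where ps: "ps \<noteq> []" "hd ps = x" "last ps = y" "distinct ps"
    "\<forall>i. Suc i < length ps \<longrightarrow> r (ps!i) (ps!Suc i)" by blast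
  show ?case
  proof (cases "z \<in> set ps")
    case True
    then obtain i where i: "i < length ps" "ps ! i = z" by (auto simp: in_set_conv_nth)
    let ?qs = "take (Suc i) ps"
    have "?qs \<noteq> []" using ps(1) by simp
    moreover have "hd ?qs = x" using ps(1,2) by (simp add: hd_take)
    moreover have "last ?qs = z" using i by (subst last_conv_nth) (auto simp: min_def, subgoal_tac "length ps = Suc i", auto)
    moreover have "distinct ?qs" using ps(4) by simp
    moreover have "\<forall>j. Suc j < length ?qs \<longrightarrow> r (?qs!j) (?qs!Suc j)" using ps(5) by auto
    ultimately show ?thesis by blast
  next
    case False
    let ?qs = "ps @ [z]"
    have "\<forall>j. Suc j < length ?qs \<longrightarrow> r (?qs!j) (?qs!Suc j)"
    proof (intro allI impI)
      fix j assume j: "Suc j < length ?qs"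
      show "r (?qs!j) (?qs!Suc j)"
      proof (cases "Suc j < length ps")
        case True
        then show ?thesis using ps(5) by (simp add: nth_append)
      next
        case False
        then have "j = length ps - 1" using j by simp
        then show ?thesis using ps(1,3) step(2) False j by (simp add: nth_append last_conv_nth)
      qed
    qed
    then show ?thesis using ps False by (intro exI[of _ ?qs]) auto
  qed
qed

lemma KT:
  assumes nc: "\<nexists>cs. is_cycle E cs" and e: "{u,v} \<in> E" and ne: "u \<noteq> v"
    and r: "reach (E - {{u,v}}) v u"
  shows False
proof -
  from walk_path[OF r[unfolded reach_def]] obtain ps where ps: "ps \<noteq> []" "hd ps = v" "last ps = u" "distinct ps"
    "\<forall>i. Suc i < length ps \<longrightarrow> {ps!i, ps!Suc i} \<in> E - {{u,v}}" by blast
  have l1: "length ps \<noteq> 1"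
  proof
    assume "length ps = 1"
    then have "hd ps = last ps" by (cases ps) auto
    with ps ne show False by simp
  qed
  have l2: "length ps \<noteq> 2"
  proof
    assume "length ps = 2"
    then have "ps ! 0 = v" "ps ! 1 = u" using ps(1,2,3) by (auto simp: hd_conv_nth last_conv_nth)
    with ps(5) \<open>length ps = 2\<close> have "{v,u} \<in> E - {{u,v}}" by (metis One_nat_def lessI numeral_2_eq_2)
    then show False by (simp add: insert_commute)
  qed
  have "length ps \<ge> 3" proof -
    have "length ps \<noteq> 0" using ps(1) by simp
    then show ?thesis using l1 l2 by linarith
  qed
  have "is_cycle E ps"
    unfolding is_cycle_def
  proof (intro conjI allI impI)
    show "3 \<le> length ps" by fact
    show "distinct ps" by fact
    fix i assume i: "i < length ps"
    show "{ps ! i, ps ! (Suc i mod length ps)} \<in> E"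
    proof (cases "Suc i < length ps")
      case True
      then show ?thesis using ps(5) by auto
    next
      case False
      then have si: "Suc i = length ps" using i by simp
      then have "i = length ps - 1" "Suc i mod length ps = 0" by auto
      then show ?thesis using ps(1,2,3) e by (simp add: hd_conv_nth last_conv_nth)
    qed
  qed
  with nc show False by blast
qed




lemma pw_props:
  assumes "path_decomp V E B0"
  shows "\<exists>B. path_decomp V E B \<and> pd_width B = pathwidth V E"
    and "\<And>B. path_decomp V E B \<Longrightarrow> pathwidth V E \<le> pd_width B"
proof -
  define P where "P w = (\<exists>B. path_decomp V E B \<and> pd_width B = w)" for w
  define Q where "Q n = P (int n - 1)" for n
  have ge: "pd_width B \<ge> -1" for B :: "'a set list" by (simp add: pd_width_def)
  have PQ: "P w \<Longrightarrow> Q (nat (w + 1))" for w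
  proof -
    assume "P w"
    then obtain B where "path_decomp V E B" "pd_width B = w" by (auto simp: P_def)
    then have "w \<ge> -1" using ge by auto
    then have "int (nat (w + 1)) - 1 = w" by simp
    then show ?thesis using \<open>P w\<close> by (simp add: Q_def)
  qed
  have "P (pd_width B0)" using assms by (auto simp: P_def)
  then have "Q (nat (pd_width B0 + 1))" by (rule PQ)
  define n0 where "n0 = (LEAST n. Q n)"
  have Qn0: "Q n0" unfolding n0_def by (rule LeastI) fact
  have mn: "int n0 - 1 \<le> w" if "P w" for w
  proof -
    have "Q (nat (w + 1))" using that by (rule PQ)
    then have "n0 \<le> nat (w + 1)" unfolding n0_def by (rule Least_le)
    then have "int n0 \<le> int (nat (w + 1))" by (rule of_nat_mono)
    moreover have "w \<ge> -1" using that ge by (auto simp: P_def)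
    ultimately show ?thesis by linarith
  qed
  have eq: "pathwidth V E = int n0 - 1"
    unfolding pathwidth_def
    apply (rule Least_equality)
    using Qn0 mn by (auto simp: Q_def P_def)
  show "\<exists>B. path_decomp V E B \<and> pd_width B = pathwidth V E" using Qn0 eq by (simp add: Q_def P_def)
  show "pathwidth V E \<le> pd_width B" if "path_decomp V E B" for B
    using mn[of "pd_width B"] that eq by (auto simp: P_def)
qed

lemma decomp_exists: "graph V E \<Longrightarrow> path_decomp V E [V]"
  unfolding path_decomp_def graph_def by auto

lemma reach_mono: assumes "E1 \<subseteq> E2" "reach E1 x y" shows "reach E2 x y"
  using assms(2) unfolding reach_def
  by (induction rule: rtranclp_induct) (use assms(1) in \<open>auto intro: rtranclp.rtrancl_into_rtrancl\<close>)

lemma reach_sym: "reach E x y \<Longrightarrow> reach E y x"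
  unfolding reach_def
proof (induction rule: rtranclp_induct)
  case base then show ?case by simp
next
  case (step y z)
  have "{z,y} \<in> E" using step(2) by (simp add: insert_commute)
  then show ?case using step(3) by (rule converse_rtranclp_into_rtranclp)
qed

lemma reach_trans: "reach E x y \<Longrightarrow> reach E y z \<Longrightarrow> reach E x z"
  unfolding reach_def by (rule rtranclp_trans)

lemma reach_step: "reach E x y \<Longrightarrow> {y,z} \<in> E \<Longrightarrow> reach E x z"
  unfolding reach_def by (rule rtranclp.rtrancl_into_rtrancl)




lemma pd_interval:
  assumes "path_decomp V E B" "v \<in> V" "i \<le> j" "j \<le> l" "l < length B" "v \<in> B ! i" "v \<in> B ! l"
  shows "v \<in> B ! j"
proof -
  have "\<forall>i j l. i \<le> j \<and> j \<le> l \<and> l < length B \<and> v \<in> B ! i \<and> v \<in> B ! l \<longrightarrow> v \<in> B ! j"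
    using assms(1,2) unfolding path_decomp_def by blast
  then show ?thesis using assms(3-7) by blast
qed

lemma pd_ne: "path_decomp V E B \<Longrightarrow> length B > 0"
  unfolding path_decomp_def by simp

lemma pd_sub: "path_decomp V E B \<Longrightarrow> j < length B \<Longrightarrow> B ! j \<subseteq> V"
  unfolding path_decomp_def by (meson nth_mem)

lemma pd_vert: "path_decomp V E B \<Longrightarrow> v \<in> V \<Longrightarrow> \<exists>j<length B. v \<in> B ! j"
  unfolding path_decomp_def by blast

lemma pd_edge: "path_decomp V E B \<Longrightarrow> e \<in> E \<Longrightarrow> \<exists>j<length B. e \<subseteq> B ! j"
  unfolding path_decomp_def by (metis in_set_conv_nth)

lemma merge:
  assumes nc: "\<nexists>cs. is_cycle E cs"
    and A: "connected_graph VA EA" "EA \<subseteq> E"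
    and B: "graph VB EB" "EB \<subseteq> E"
  shows "pathwidth (VA \<union> VB) (EA \<union> EB) \<le> pathwidth VA EA + pathwidth VB EB + 1"
proof -
  have gA: "graph VA EA" using A by (simp add: connected_graph_def)
  have conA: "\<And>u v. u \<in> VA \<Longrightarrow> v \<in> VA \<Longrightarrow> reach EA u v" using A by (simp add: connected_graph_def)
  obtain PA where PA: "path_decomp VA EA PA" "pd_width PA = pathwidth VA EA"
    using pw_props(1)[OF decomp_exists[OF gA]] by blast
  obtain PB where PB: "path_decomp VB EB PB" "pd_width PB = pathwidth VB EB"
    using pw_props(1)[OF decomp_exists[OF B(1)]] by blast
  define m where "m = length PA"
  define n where "n = length PB"
  have m0: "m > 0" using pd_ne[OF PA(1)] by (simp add: m_def)
  have n0: "n > 0" using pd_ne[OF PB(1)] by (simp add: n_def)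
  have PAsub: "j < m \<Longrightarrow> PA ! j \<subseteq> VA" for j using pd_sub[OF PA(1)] by (simp add: m_def)
  have PBsub: "t < n \<Longrightarrow> PB ! t \<subseteq> VB" for t using pd_sub[OF PB(1)] by (simp add: n_def)
  have finA: "finite VA" using gA by (simp add: graph_def)
  have finB: "finite VB" using B(1) by (simp add: graph_def)
  have eA: "e \<in> EA \<Longrightarrow> e \<subseteq> VA" for e using gA by (auto simp: graph_def)
  have eB: "e \<in> EB \<Longrightarrow> \<exists>x y. e = {x,y} \<and> x \<noteq> y \<and> x \<in> VB \<and> y \<in> VB" for e
    using B(1) unfolding graph_def by (metis card_2_iff insert_subset)
  define EO where "EO = {e \<in> EB. e \<inter> VA = {}}"
  define N where "N d = {a \<in> VA. \<exists>d'. reach EO d d' \<and> {d',a} \<in> EB}" for d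
  have out: "d' \<notin> VA" if rr: "reach EO d d'" and dA: "d \<notin> VA" for d d'
    using rr unfolding reach_def
    by (induction rule: rtranclp_induct) (use dA in \<open>auto simp: EO_def\<close>)
  have uniq: "a1 = a2" if hyp: "d \<notin> VA" "a1 \<in> N d" "a2 \<in> N d" for d a1 a2
  proof (rule ccontr)
    assume ne: "a1 \<noteq> a2"
    obtain d1 where d1: "reach EO d d1" "{d1,a1} \<in> EB" "a1 \<in> VA" using hyp(2) by (auto simp: N_def)
    obtain d2 where d2: "reach EO d d2" "{d2,a2} \<in> EB" "a2 \<in> VA" using hyp(3) by (auto simp: N_def)
    have d1o: "d1 \<notin> VA" using out d1(1) hyp(1) by blast
    have d2o: "d2 \<notin> VA" using out d2(1) hyp(1) by blast
    have r12: "reach EO d1 d2" using reach_sym[OF d1(1)] d2(1) by (rule reach_trans)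
    define E' where "E' = E - {{a1,d1}}"
    have "EO \<subseteq> E'" using B(2) d1(3) by (auto simp: EO_def E'_def)
    then have r1: "reach E' d1 d2" using r12 by (rule reach_mono)
    have "a2 \<in> {a1,d1} \<Longrightarrow> False" using ne d1o d2(3) by auto
    then have "{d2,a2} \<noteq> {a1,d1}" by blast
    moreover have "{d2,a2} \<in> E" using d2(2) B(2) by blast
    ultimately have d2e: "{d2,a2} \<in> E'" unfolding E'_def by blast
    have r2: "reach E' d1 a2" using r1 d2e by (rule reach_step)
    have "EA \<subseteq> E'"
    proof
      fix e assume e: "e \<in> EA"
      then have "e \<subseteq> VA" by (rule eA)
      then have "e \<noteq> {a1,d1}" using d1o by blast
      then show "e \<in> E'" using e A(2) unfolding E'_def by blast
    qed
    then have r3: "reach E' a2 a1" using conA[OF d2(3) d1(3)] by (rule reach_mono)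
    have rr: "reach E' d1 a1" using r2 r3 by (rule reach_trans)
    have ee: "{a1,d1} \<in> E" using d1(2) B(2) by (auto simp: insert_commute)
    have nn: "a1 \<noteq> d1" using d1o d1(3) by auto
    show False by (rule KT[OF nc ee nn]) (use rr in \<open>simp add: E'_def\<close>)
  qed
  have inner: "{x,y} \<in> EA" if "{x,y} \<in> EB" "x \<in> VA" "y \<in> VA" "x \<noteq> y" for x y
  proof (rule ccontr)
    assume "{x,y} \<notin> EA"
    then have "EA \<subseteq> E - {{x,y}}" using A(2) by auto
    then have rr: "reach (E - {{x,y}}) y x" using conA[OF that(3,2)] by (rule reach_mono)
    have ee: "{x,y} \<in> E" using that(1) B(2) by auto
    show False by (rule KT[OF nc ee that(4) rr])
  qed
  define f where "f d = (SOME j. j < m \<and> N d \<subseteq> PA ! j)" for d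
  have f: "f d < m \<and> N d \<subseteq> PA ! f d" if "d \<notin> VA" for d
  proof -
    have "\<exists>j. j < m \<and> N d \<subseteq> PA ! j"
    proof (cases "N d = {}")
      case True then show ?thesis using m0 by auto
    next
      case False
      then obtain a where a: "a \<in> N d" by auto
      have "b = a" if "b \<in> N d" for b using uniq[OF \<open>d \<notin> VA\<close> that a] .
      then have "N d = {a}" using a by blast
      moreover have "a \<in> VA" using a by (simp add: N_def)
      then obtain j where "j < m" "a \<in> PA ! j" using pd_vert[OF PA(1)] unfolding m_def by blast
      ultimately show ?thesis by auto
    qed
    then show ?thesis unfolding f_def by (rule someI_ex)
  qed
  define X where "X j = {d. d \<notin> VA \<and> f d = j}" for j
  define R where "R = map (\<lambda>p. PA ! (p div n) \<union> (PB ! (p mod n) \<inter> X (p div n))) [0..<m*n]"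
  have lenR: "length R = m * n" by (simp add: R_def)
  have Rnth: "R ! p = PA ! (p div n) \<union> (PB ! (p mod n) \<inter> X (p div n))" if "p < m * n" for p
    using that by (simp add: R_def)
  have pdiv: "p div n < m" if "p < m * n" for p using that by (simp add: less_mult_imp_div_less)
  have pmod: "p mod n < n" for p using n0 by simp
  have pos: "j * n + t < m * n" "(j * n + t) div n = j" "(j * n + t) mod n = t" if "j < m" "t < n" for j t
  proof -
    have "j * n + t < j * n + n" using that by simp
    also have "\<dots> = Suc j * n" by simp
    also have "\<dots> \<le> m * n" using that(1) by (intro mult_right_mono) auto
    finally show "j * n + t < m * n" .
    show "(j * n + t) div n = j" "(j * n + t) mod n = t" using that by auto
  qed
  have memA: "v \<in> R ! p \<longleftrightarrow> v \<in> PA ! (p div n)" if "p < m * n" "v \<in> VA" for p v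
    using that by (auto simp: Rnth X_def)
  have memO: "v \<in> R ! p \<longleftrightarrow> v \<in> PB ! (p mod n) \<and> f v = p div n" if "p < m * n" "v \<notin> VA" for p v
    using that PAsub[OF pdiv[OF that(1)]] by (auto simp: Rnth X_def)
  have dec: "path_decomp (VA \<union> VB) (EA \<union> EB) R"
    unfolding path_decomp_def
  proof (intro conjI ballI)
    show "R \<noteq> []" using m0 n0 lenR by auto
  next
    fix b assume "b \<in> set R"
    then obtain p where p: "p < m * n" "b = R ! p" by (auto simp: in_set_conv_nth lenR)
    then show "b \<subseteq> VA \<union> VB" using PAsub[OF pdiv[OF p(1)]] PBsub[OF pmod] by (auto simp: Rnth)
  next
    fix e assume "e \<in> EA \<union> EB"
    then show "\<exists>b\<in>set R. e \<subseteq> b"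
    proof
      assume e: "e \<in> EA"
      then obtain j where j: "j < m" "e \<subseteq> PA ! j" using pd_edge[OF PA(1)] unfolding m_def by blast
      have "R ! (j * n + 0) \<in> set R" using pos[OF j(1) n0] lenR by auto
      moreover have "e \<subseteq> R ! (j * n + 0)" using pos[OF j(1) n0] j(2) by (simp add: Rnth del: add_0_right) blast
      ultimately show ?thesis by blast
    next
      assume e: "e \<in> EB"
      then obtain x y where xy: "e = {x,y}" "x \<noteq> y" "x \<in> VB" "y \<in> VB" using eB by blast
      show ?thesis
      proof (cases "x \<in> VA")
        case xA: True
        show ?thesis
        proof (cases "y \<in> VA")
          case True
          then have "e \<in> EA" using inner e xy xA by auto
          then obtain j where j: "j < m" "e \<subseteq> PA ! j" using pd_edge[OF PA(1)] unfolding m_def by blast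
          have "R ! (j * n + 0) \<in> set R" using pos[OF j(1) n0] lenR by auto
          moreover have "e \<subseteq> R ! (j * n + 0)" using pos[OF j(1) n0] j(2) by (simp add: Rnth del: add_0_right) blast
          ultimately show ?thesis by blast
        next
          case yO: False
          have "x \<in> N y" using e xy xA by (auto simp: N_def reach_def insert_commute)
          then have xin: "x \<in> PA ! f y" and fy: "f y < m" using f[OF yO] by auto
          obtain t where t: "t < n" "y \<in> PB ! t" using pd_vert[OF PB(1) xy(4)] unfolding n_def by blast
          let ?p = "f y * n + t"
          have "R ! ?p \<in> set R" using pos[OF fy t(1)] lenR by auto
          moreover have "e \<subseteq> R ! ?p"
            using memA[OF pos(1)[OF fy t(1)] xA] memO[OF pos(1)[OF fy t(1)] yO] pos[OF fy t(1)] xin t xy(1) by auto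
          ultimately show ?thesis by blast
        qed
      next
        case xO: False
        show ?thesis
        proof (cases "y \<in> VA")
          case yA: True
          have "y \<in> N x" using e xy yA by (auto simp: N_def reach_def)
          then have yin: "y \<in> PA ! f x" and fx: "f x < m" using f[OF xO] by auto
          obtain t where t: "t < n" "x \<in> PB ! t" using pd_vert[OF PB(1) xy(3)] unfolding n_def by blast
          let ?p = "f x * n + t"
          have "R ! ?p \<in> set R" using pos[OF fx t(1)] lenR by auto
          moreover have "e \<subseteq> R ! ?p"
            using memA[OF pos(1)[OF fx t(1)] yA] memO[OF pos(1)[OF fx t(1)] xO] pos[OF fx t(1)] yin t xy(1) by auto
          ultimately show ?thesis by blast
        next
          case yO: False
          have "e \<in> EO" using e xy xO yO by (auto simp: EO_def)
          then have rxy: "reach EO x y" using xy(1) by (auto simp: reach_def)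
          have ryx: "reach EO y x" using rxy by (rule reach_sym)
          have "reach EO x d' = reach EO y d'" for d' using reach_trans[OF rxy] reach_trans[OF ryx] by blast
          then have "N x = N y" unfolding N_def by simp
          then have fxy: "f x = f y" by (simp add: f_def)
          have fx: "f x < m" using f[OF xO] by auto
          obtain t where t: "t < n" "e \<subseteq> PB ! t" using pd_edge[OF PB(1) e] unfolding n_def by blast
          let ?p = "f x * n + t"
          have "R ! ?p \<in> set R" using pos[OF fx t(1)] lenR by auto
          moreover have "e \<subseteq> R ! ?p"
            using memO[OF pos(1)[OF fx t(1)] xO] memO[OF pos(1)[OF fx t(1)] yO] pos[OF fx t(1)] t xy(1) fxy by auto
          ultimately show ?thesis by blast
        qed
      qed
    qed
  next
    fix v assume v: "v \<in> VA \<union> VB"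
    show "\<exists>i<length R. v \<in> R ! i"
    proof (cases "v \<in> VA")
      case True
      then obtain j where j: "j < m" "v \<in> PA ! j" using pd_vert[OF PA(1)] unfolding m_def by blast
      then show ?thesis using memA[OF pos(1)[OF j(1) n0] True] pos[OF j(1) n0] lenR by (intro exI[of _ "j * n + 0"]) auto
    next
      case False
      then have "v \<in> VB" using v by auto
      then obtain t where t: "t < n" "v \<in> PB ! t" using pd_vert[OF PB(1)] unfolding n_def by blast
      have fv: "f v < m" using f[OF False] by auto
      show ?thesis using memO[OF pos(1)[OF fv t(1)] False] pos[OF fv t(1)] lenR t
        by (intro exI[of _ "f v * n + t"]) auto
    qed
    show "\<forall>i j l. i \<le> j \<and> j \<le> l \<and> l < length R \<and> v \<in> R ! i \<and> v \<in> R ! l \<longrightarrow> v \<in> R ! j"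
    proof (intro allI impI)
      fix i j l assume h: "i \<le> j \<and> j \<le> l \<and> l < length R \<and> v \<in> R ! i \<and> v \<in> R ! l"
      then have il: "i < m * n" "j < m * n" "l < m * n" using lenR by auto
      have d1: "i div n \<le> j div n" "j div n \<le> l div n" using h by (auto intro: div_le_mono)
      show "v \<in> R ! j"
      proof (cases "v \<in> VA")
        case True
        have "v \<in> PA ! (i div n)" "v \<in> PA ! (l div n)" using h memA[OF il(1) True] memA[OF il(3) True] by auto
        then have "v \<in> PA ! (j div n)" using pd_interval[OF PA(1) True d1] pdiv[OF il(3)]
          unfolding m_def by blast
        then show ?thesis using memA[OF il(2) True] by auto
      next
        case False
        have hi: "v \<in> PB ! (i mod n)" "f v = i div n" using h memO[OF il(1) False] by auto
        have hl: "v \<in> PB ! (l mod n)" "f v = l div n" using h memO[OF il(3) False] by auto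
        have jd: "j div n = f v" using d1 hi hl by auto
        have "i = (i div n) * n + i mod n" "j = (j div n) * n + j mod n" "l = (l div n) * n + l mod n" by simp_all
        moreover have "i div n * n = j div n * n" "j div n * n = l div n * n" using jd hi(2) hl(2) by simp_all
        ultimately have m1: "i mod n \<le> j mod n" "j mod n \<le> l mod n" using h by linarith+
        have vB: "v \<in> VB" using v False by auto
        have "v \<in> PB ! (j mod n)" using pd_interval[OF PB(1) vB m1] hi(1) hl(1) pmod[of l]
          unfolding n_def by blast
        then show ?thesis using memO[OF il(2) False] jd by auto
      qed
    qed
  qed
  define MA where "MA = Max (card ` set PA)"
  define MB where "MB = Max (card ` set PB)"
  have cA: "card (PA ! j) \<le> MA" if "j < m" for j
    unfolding MA_def using that by (intro Max_ge) (auto simp: m_def)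
  have cB: "card (PB ! t) \<le> MB" if "t < n" for t
    unfolding MB_def using that by (intro Max_ge) (auto simp: n_def)
  have cR: "card (R ! p) \<le> MA + MB" if "p < m * n" for p
  proof -
    have c1: "card (R ! p) \<le> card (PA ! (p div n)) + card (PB ! (p mod n) \<inter> X (p div n))"
      unfolding Rnth[OF that] by (rule card_Un_le)
    have c2: "card (PB ! (p mod n) \<inter> X (p div n)) \<le> card (PB ! (p mod n))"
      using PBsub[OF pmod] finB by (intro card_mono) (auto intro: finite_subset)
    show ?thesis using c1 c2 cA[OF pdiv[OF that]] cB[OF pmod[of p]] by linarith
  qed
  have "Max (card ` set R) \<le> MA + MB"
    using cR lenR m0 n0 by (subst Max_le_iff) (auto simp: in_set_conv_nth)
  then have "pd_width R \<le> pd_width PA + pd_width PB + 1"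
    by (simp add: pd_width_def MA_def MB_def)
  moreover have "pathwidth (VA \<union> VB) (EA \<union> EB) \<le> pd_width R" using pw_props(2)[OF dec dec] .
  ultimately show ?thesis using PA(2) PB(2) by linarith
qed




lemma crossing:
  assumes "reach E x y" "x \<in> W" "y \<notin> W"
  shows "\<exists>a b. {a,b} \<in> E \<and> a \<in> W \<and> b \<notin> W"
  using assms unfolding reach_def
proof (induction rule: rtranclp_induct)
  case base then show ?case by simp
next
  case (step y z)
  show ?case
  proof (cases "y \<in> W")
    case True then show ?thesis using step.hyps(2) step.prems(2) by (intro exI[of _ y] exI[of _ z]) simp
  next
    case False then show ?thesis using step.IH step.prems(1) by simp
  qed
qed

lemma conn_union:
  assumes c1: "connected_graph V1 E1" and c2: "connected_graph V2 E2" and i: "V1 \<inter> V2 \<noteq> {}"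
  shows "connected_graph (V1 \<union> V2) (E1 \<union> E2)"
proof -
  obtain c where c: "c \<in> V1" "c \<in> V2" using i by blast
  have g1: "graph V1 E1" using c1 by (simp add: connected_graph_def)
  have g2: "graph V2 E2" using c2 by (simp add: connected_graph_def)
  have "finite (V1 \<union> V2)" using g1 g2 by (simp add: graph_def)
  moreover have "\<forall>e\<in>E1 \<union> E2. card e = 2 \<and> e \<subseteq> V1 \<union> V2" using g1 g2 unfolding graph_def by blast
  ultimately have g: "graph (V1 \<union> V2) (E1 \<union> E2)" unfolding graph_def by blast
  have r1: "reach (E1 \<union> E2) u v" if "u \<in> V1" "v \<in> V1" for u v
  proof -
    have "reach E1 u v" using c1 that by (simp add: connected_graph_def)
    then show ?thesis by (rule reach_mono[rotated]) simp
  qed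
  have r2: "reach (E1 \<union> E2) u v" if "u \<in> V2" "v \<in> V2" for u v
  proof -
    have "reach E2 u v" using c2 that by (simp add: connected_graph_def)
    then show ?thesis by (rule reach_mono[rotated]) simp
  qed
  have rr: "reach (E1 \<union> E2) u v" if "u \<in> V1 \<union> V2" "v \<in> V1 \<union> V2" for u v
  proof -
    have "reach (E1 \<union> E2) u c" using that(1) r1 r2 c by blast
    moreover have "reach (E1 \<union> E2) c v" using that(2) r1 r2 c by blast
    ultimately show ?thesis by (rule reach_trans)
  qed
  show ?thesis unfolding connected_graph_def
  proof (intro conjI ballI)
    show "V1 \<union> V2 \<noteq> {}" using c by blast
  qed (use g rr in auto)
qed

theorem corollary8:
  fixes V :: "'a set" and E :: "'a set set"
    and k :: nat and Vs :: "nat \<Rightarrow> 'a set" and Es :: "nat \<Rightarrow> 'a set set"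
  assumes "tree V E"
    and "\<forall>i<k. subtree (Vs i) (Es i) V E"
    and "V = (\<Union>i<k. Vs i)" and "E = (\<Union>i<k. Es i)"
  shows "pathwidth V E + 1 \<le> (\<Sum>i<k. pathwidth (Vs i) (Es i) + 1)"
proof -
  have nc: "\<nexists>cs. is_cycle E cs" and conn: "connected_graph V E" using assms(1) by (auto simp: tree_def)
  have subc: "connected_graph (Vs i) (Es i)" if "i < k" for i using assms(2) that by (auto simp: subtree_def)
  have subE: "Es i \<subseteq> E" if "i < k" for i using assms(2) that by (auto simp: subtree_def subgraph_def)
  have subg: "graph (Vs i) (Es i)" if "i < k" for i using subc[OF that] by (simp add: connected_graph_def)
  define US where "US S = (\<Union>i\<in>S. Vs i)" for S
  define UE where "UE S = (\<Union>i\<in>S. Es i)" for S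
  define Pr where "Pr n = (\<exists>S \<subseteq> {..<k}. card S = n \<and> connected_graph (US S) (UE S) \<and>
      pathwidth (US S) (UE S) + 1 \<le> (\<Sum>i\<in>S. pathwidth (Vs i) (Es i) + 1))" for n
  have k0: "k > 0" using conn assms(3) by (auto simp: connected_graph_def)
  have claim: "1 \<le> n \<Longrightarrow> n \<le> k \<Longrightarrow> Pr n" for n
  proof (induction n)
    case 0 then show ?case by simp
  next
    case (Suc n)
    show ?case
    proof (cases "n = 0")
      case True
      have "US {0} = Vs 0" "UE {0} = Es 0" by (simp_all add: US_def UE_def)
      then show ?thesis unfolding Pr_def using True k0 subc[OF k0]
        by (intro exI[of _ "{0}"]) auto
    next
      case False
      then obtain S where S: "S \<subseteq> {..<k}" "card S = n" "connected_graph (US S) (UE S)"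
        "pathwidth (US S) (UE S) + 1 \<le> (\<Sum>i\<in>S. pathwidth (Vs i) (Es i) + 1)"
        using Suc unfolding Pr_def by auto
      have finS: "finite S" using S(1) finite_subset by blast
      have "\<not> {..<k} \<subseteq> S"
      proof
        assume "{..<k} \<subseteq> S"
        then have "card {..<k} \<le> card S" using finS by (rule card_mono[rotated])
        then show False using S(2) Suc(3) by simp
      qed
      then obtain j where j: "j < k" "j \<notin> S" by auto
      have "\<exists>i<k. i \<notin> S \<and> Vs i \<inter> US S \<noteq> {}"
      proof (rule ccontr)
        assume H: "\<not> ?thesis"
        obtain x where x: "x \<in> US S" using S(3) by (auto simp: connected_graph_def)
        obtain y where y: "y \<in> Vs j" using subc[OF j(1)] by (auto simp: connected_graph_def)
        have yn: "y \<notin> US S" using H j y by blast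
        have "x \<in> V" using x S(1) unfolding assms(3) US_def by blast
        moreover have "y \<in> V" using y j(1) unfolding assms(3) by blast
        ultimately have "reach E x y" using conn by (simp add: connected_graph_def)
        then obtain a b where ab: "{a,b} \<in> E" "a \<in> US S" "b \<notin> US S" using crossing[OF _ x yn] by blast
        then obtain i where i: "i < k" "{a,b} \<in> Es i" using assms(4) by blast
        then have "{a,b} \<subseteq> Vs i" using subg[OF i(1)] unfolding graph_def by blast
        then have abi: "a \<in> Vs i" "b \<in> Vs i" by auto
        show False
        proof (cases "i \<in> S")
          case True
          then have "b \<in> US S" using abi unfolding US_def by blast
          then show False using ab(3) by contradiction
        next
          case False
          then have "Vs i \<inter> US S \<noteq> {}" using abi ab(2) by blast
          then show False using H i(1) False by blast
        qed
      qed
      then obtain i where i: "i < k" "i \<notin> S" "Vs i \<inter> US S \<noteq> {}" by blast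
      have US': "US (insert i S) = US S \<union> Vs i" and UE': "UE (insert i S) = UE S \<union> Es i"
        by (auto simp: US_def UE_def)
      have c': "connected_graph (US S \<union> Vs i) (UE S \<union> Es i)"
        using i(3) by (intro conn_union[OF S(3) subc[OF i(1)]]) blast
      have UEsub: "UE S \<subseteq> E" using S(1) subE by (auto simp: UE_def)
      have m: "pathwidth (US S \<union> Vs i) (UE S \<union> Es i) \<le> pathwidth (US S) (UE S) + pathwidth (Vs i) (Es i) + 1"
        by (rule merge[OF nc S(3) UEsub subg[OF i(1)] subE[OF i(1)]])
      have sm: "(\<Sum>i\<in>insert i S. pathwidth (Vs i) (Es i) + 1) = pathwidth (Vs i) (Es i) + 1 + (\<Sum>i\<in>S. pathwidth (Vs i) (Es i) + 1)"
        using finS i(2) by simp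
      have "card (insert i S) = Suc n" using finS i(2) S(2) by simp
      moreover have "insert i S \<subseteq> {..<k}" using S(1) i(1) by auto
      moreover have "pathwidth (US (insert i S)) (UE (insert i S)) + 1 \<le> (\<Sum>i\<in>insert i S. pathwidth (Vs i) (Es i) + 1)"
        unfolding US' UE' sm using m S(4) by linarith
      ultimately show ?thesis unfolding Pr_def using c' US' UE' by metis
    qed
  qed
  from claim[of k] k0 obtain S where S: "S \<subseteq> {..<k}" "card S = k"
    "pathwidth (US S) (UE S) + 1 \<le> (\<Sum>i\<in>S. pathwidth (Vs i) (Es i) + 1)"
    unfolding Pr_def by auto
  have "S = {..<k}" using S(1,2) by (intro card_subset_eq) auto
  then show ?thesis using S(3) assms(3,4) by (simp add: US_def UE_def)
qed


end
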